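(* Let $\alpha_0,\alpha_1,\alpha_2\in\mathbb{C}$ with $\alpha_0+\alpha_1+\alpha_2=3$, and let $\tau_0,\tau_1,\tau_2$ be nonvanishing (meromorphic) functions of $x$. Define $$f_i=\frac{\tau_{i+1}'}{\tau_{i+1}}-\frac{\tau_{i+2}'}{\tau_{i+2}}+x\quad(i=0,1,2),\qquad g=\frac{\tau_0'}{\tau_0}+\frac{\tau_1'}{\tau_1}+\frac{\tau_2'}{\tau_2}.$$ Then $(f_0,f_1,f_2)$ satisfies $f_i'+f_i(f_{i+1}-f_{i+2})=\alpha_i$ for $i=0,1,2$ (with $f_0+f_1+f_2=3x$) and $g$ satisfies $2g'+(f_0-x)^2+(f_1-x)^2+(f_2-x)^2=0$ if and only if $$\Big(D_x^2-xD_x-\frac{\alpha_i-\alpha_{i+1}}{3}\Big)\,\tau_i\cdot\tau_{i+1}=0\qquad(i=0,1,2).$$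
   Context: Indices are taken modulo 3 and $'=d/dx$. Hirota's bilinear operators are defined by $P(D_x)\,F\cdot G=P(\partial_y)\big(F(x+y)G(x-y)\big)\big|_{y=0}$ for a constant-coefficient polynomial $P$; thus $D_xF\cdot G=F'G-FG'$ and $D_x^2F\cdot G=F''G-2F'G'+FG''$. *)

theory Defs
  imports "HOL-Complex_Analysis.Complex_Analysis"
begin

definition hirota_D1 :: "(complex \<Rightarrow> complex) \<Rightarrow> (complex \<Rightarrow> complex) \<Rightarrow> complex \<Rightarrow> complex" where
  "hirota_D1 F G x = deriv F x * G x - F x * deriv G x"

definition hirota_D2 :: "(complex \<Rightarrow> complex) \<Rightarrow> (complex \<Rightarrow> complex) \<Rightarrow> complex \<Rightarrow> complex" where
  "hirota_D2 F G x = (deriv ^^ 2) F x * G x - 2 * deriv F x * deriv G x + F x * (deriv ^^ 2) G x"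

definition fP :: "(nat \<Rightarrow> complex \<Rightarrow> complex) \<Rightarrow> nat \<Rightarrow> complex \<Rightarrow> complex" where
  "fP \<tau> i x = deriv (\<tau> ((i + 1) mod 3)) x / \<tau> ((i + 1) mod 3) x
             - deriv (\<tau> ((i + 2) mod 3)) x / \<tau> ((i + 2) mod 3) x + x"

definition gP :: "(nat \<Rightarrow> complex \<Rightarrow> complex) \<Rightarrow> complex \<Rightarrow> complex" where
  "gP \<tau> x = (\<Sum>i<3. deriv (\<tau> i) x / \<tau> i x)"

end

theory Submission imports Defs begin

lemma hir:
  fixes t a b t' a' b' x c :: complex
  assumes "t \<noteq> 0" "t' \<noteq> 0"
  shows "b * t' - 2 * a * a' + t * b' - x * (a * t' - t * a') - c * (t * t')
   = t * t' * ((b*t - a*a)/(t*t) + (b'*t' - a'*a')/(t'*t') + (a/t - a'/t')^2 - x * (a/t - a'/t') - c)"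
  using assms by (simp add: field_simps power2_eq_square)

lemma alg:
  fixes p q r P Q R y a0 a1 a2 :: complex
  assumes "a0 + a1 + a2 = 3"
  defines "B0 \<equiv> P + Q + (p - q)^2 - y*(p-q) - (a0 - a1)/3"
  defines "B1 \<equiv> Q + R + (q - r)^2 - y*(q-r) - (a1 - a2)/3"
  defines "B2 \<equiv> R + P + (r - p)^2 - y*(r-p) - (a2 - a0)/3"
  shows "((Q - R + 1) + (q - r + y) * ((r - p + y) - (p - q + y)) = a0 \<and>
          (R - P + 1) + (r - p + y) * ((p - q + y) - (q - r + y)) = a1 \<and>
          (P - Q + 1) + (p - q + y) * ((q - r + y) - (r - p + y)) = a2 \<and>
          2 * (P + Q + R) + ((q - r + y - y)^2 + (r - p + y - y)^2 + (p - q + y - y)^2) = 0)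
     \<longleftrightarrow> (B0 = 0 \<and> B1 = 0 \<and> B2 = 0)"
proof -
  have a0: "a0 = 3 - a1 - a2" using assms(1) by (simp add: algebra_simps eq_diff_eq)
  have e0: "(Q - R + 1) + (q - r + y) * ((r - p + y) - (p - q + y)) - a0 = B0 - B2"
    unfolding B0_def B2_def a0 by (simp add: field_simps power2_eq_square; simp add: algebra_simps)
  have e1: "(R - P + 1) + (r - p + y) * ((p - q + y) - (q - r + y)) - a1 = B1 - B0"
    unfolding B0_def B1_def a0 by (simp add: field_simps power2_eq_square; simp add: algebra_simps)
  have e2: "(P - Q + 1) + (p - q + y) * ((q - r + y) - (r - p + y)) - a2 = B2 - B1"
    unfolding B1_def B2_def a0 by (simp add: field_simps power2_eq_square; simp add: algebra_simps)
  have g: "2 * (P + Q + R) + ((q - r + y - y)^2 + (r - p + y - y)^2 + (p - q + y - y)^2) = B0 + B1 + B2"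
    unfolding B0_def B1_def B2_def by (simp add: field_simps power2_eq_square; simp add: algebra_simps)
  show ?thesis
    apply (subst eq_iff_diff_eq_0[of _ a0], subst eq_iff_diff_eq_0[of _ a1], subst eq_iff_diff_eq_0[of _ a2])
    unfolding e0 e1 e2 g by auto
qed
theorem theorem3p1:
  fixes \<alpha> :: "nat \<Rightarrow> complex" and \<tau> :: "nat \<Rightarrow> complex \<Rightarrow> complex" and S :: "complex set"
  assumes "\<alpha> 0 + \<alpha> 1 + \<alpha> 2 = 3"
    and "open S"
    and "\<forall>i<3. \<tau> i holomorphic_on S"
    and "\<forall>i<3. \<forall>x\<in>S. \<tau> i x \<noteq> 0"
  shows "((\<forall>i<3. \<forall>x\<in>S. deriv (fP \<tau> i) x
              + fP \<tau> i x * (fP \<tau> ((i + 1) mod 3) x - fP \<tau> ((i + 2) mod 3) x) = \<alpha> i)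
          \<and> (\<forall>x\<in>S. fP \<tau> 0 x + fP \<tau> 1 x + fP \<tau> 2 x = 3 * x)
          \<and> (\<forall>x\<in>S. 2 * deriv (gP \<tau>) x + (\<Sum>i<3. (fP \<tau> i x - x)^2) = 0))
     \<longleftrightarrow> (\<forall>i<3. \<forall>x\<in>S.
            hirota_D2 (\<tau> i) (\<tau> ((i + 1) mod 3)) x
          - x * hirota_D1 (\<tau> i) (\<tau> ((i + 1) mod 3)) x
          - (\<alpha> i - \<alpha> ((i + 1) mod 3)) / 3 * (\<tau> i x * \<tau> ((i + 1) mod 3) x) = 0)"
  proof -
  note A = assms
  define L where "L k y = (deriv (deriv (\<tau> k)) y * \<tau> k y - deriv (\<tau> k) y * deriv (\<tau> k) y) / (\<tau> k y * \<tau> k y)" for k y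
  define l where "l k y = deriv (\<tau> k) y / \<tau> k y" for k y
  have m: "(0 + 1) mod 3 = (1::nat)" "(0 + 2) mod 3 = (2::nat)" "(1 + 1) mod 3 = (2::nat)"
      "(1 + 2) mod 3 = (0::nat)" "(2 + 1) mod 3 = (0::nat)" "(2 + 2) mod 3 = (1::nat)" by simp_all
  have D: "((\<lambda>y. deriv (\<tau> k) y / \<tau> k y) has_field_derivative L k x) (at x)" if "k < 3" "x \<in> S" for k x
  proof -
    have h: "\<tau> k holomorphic_on S" using A(3) that by auto
    have h2: "deriv (\<tau> k) holomorphic_on S" using holomorphic_deriv[OF h A(2)] .
    have d1: "(\<tau> k has_field_derivative deriv (\<tau> k) x) (at x)"
      using h A(2) that(2) by (meson holomorphic_derivI)
    have d2: "(deriv (\<tau> k) has_field_derivative deriv (deriv (\<tau> k)) x) (at x)"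
      using h2 A(2) that(2) by (meson holomorphic_derivI)
    have nz: "\<tau> k x \<noteq> 0" using A(4) that by auto
    show ?thesis unfolding L_def using DERIV_divide[OF d2 d1 nz] .
  qed
  have fPe: "fP \<tau> i = (\<lambda>y. deriv (\<tau> ((i + 1) mod 3)) y / \<tau> ((i + 1) mod 3) y
             - deriv (\<tau> ((i + 2) mod 3)) y / \<tau> ((i + 2) mod 3) y + y)" for i
    by (rule ext) (simp add: fP_def)
  have dF: "deriv (fP \<tau> i) x = L ((i + 1) mod 3) x - L ((i + 2) mod 3) x + 1" if "x \<in> S" for i x
    unfolding fPe
    by (rule DERIV_imp_deriv) (intro derivative_intros D that, auto)
  have gPe: "gP \<tau> = (\<lambda>y. deriv (\<tau> 0) y / \<tau> 0 y + deriv (\<tau> 1) y / \<tau> 1 y + deriv (\<tau> 2) y / \<tau> 2 y)"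
    by (rule ext) (simp add: gP_def numeral_3_eq_3 numeral_2_eq_2)
  have dG: "deriv (gP \<tau>) x = L 0 x + L 1 x + L 2 x" if "x \<in> S" for x
    unfolding gPe
    by (rule DERIV_imp_deriv) (intro derivative_intros D that, auto)
  have fv: "fP \<tau> i x = l ((i + 1) mod 3) x - l ((i + 2) mod 3) x + x" for i x
    by (simp add: fP_def l_def)
  have all3: "(\<forall>i<3. P i) \<longleftrightarrow> P 0 \<and> P 1 \<and> P 2" for P :: "nat \<Rightarrow> bool"
    by (auto simp: numeral_3_eq_3 numeral_2_eq_2 less_Suc_eq)
  have H: "hirota_D2 (\<tau> i) (\<tau> j) x - x * hirota_D1 (\<tau> i) (\<tau> j) x - c * (\<tau> i x * \<tau> j x)
     = \<tau> i x * \<tau> j x * (L i x + L j x + (l i x - l j x)^2 - x * (l i x - l j x) - c)"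
    if "i < 3" "j < 3" "x \<in> S" for i j x c
  proof -
    have "\<tau> i x \<noteq> 0" "\<tau> j x \<noteq> 0" using A(4) that by auto
    thus ?thesis unfolding hirota_D2_def hirota_D1_def L_def l_def
      using hir[of "\<tau> i x" "\<tau> j x"] by (simp add: numeral_2_eq_2)
  qed
  have nz: "\<tau> i x * \<tau> j x \<noteq> 0" if "i < 3" "j < 3" "x \<in> S" for i j x
    using A(4) that by auto
  have HZ: "(hirota_D2 (\<tau> i) (\<tau> j) x - x * hirota_D1 (\<tau> i) (\<tau> j) x - c * (\<tau> i x * \<tau> j x) = 0)
     \<longleftrightarrow> (L i x + L j x + (l i x - l j x)^2 - x * (l i x - l j x) - c = 0)"
    if "i < 3" "j < 3" "x \<in> S" for i j x c
    unfolding H[OF that] mult_eq_0_iff using nz[OF that] by auto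
  have pt: "(deriv (fP \<tau> 0) x + fP \<tau> 0 x * (fP \<tau> 1 x - fP \<tau> 2 x) = \<alpha> 0 \<and>
             deriv (fP \<tau> 1) x + fP \<tau> 1 x * (fP \<tau> 2 x - fP \<tau> 0 x) = \<alpha> 1 \<and>
             deriv (fP \<tau> 2) x + fP \<tau> 2 x * (fP \<tau> 0 x - fP \<tau> 1 x) = \<alpha> 2 \<and>
             2 * deriv (gP \<tau>) x + ((fP \<tau> 0 x - x)^2 + (fP \<tau> 1 x - x)^2 + (fP \<tau> 2 x - x)^2) = 0)
       \<longleftrightarrow> (hirota_D2 (\<tau> 0) (\<tau> 1) x - x * hirota_D1 (\<tau> 0) (\<tau> 1) x - (\<alpha> 0 - \<alpha> 1) / 3 * (\<tau> 0 x * \<tau> 1 x) = 0 \<and>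
            hirota_D2 (\<tau> 1) (\<tau> 2) x - x * hirota_D1 (\<tau> 1) (\<tau> 2) x - (\<alpha> 1 - \<alpha> 2) / 3 * (\<tau> 1 x * \<tau> 2 x) = 0 \<and>
            hirota_D2 (\<tau> 2) (\<tau> 0) x - x * hirota_D1 (\<tau> 2) (\<tau> 0) x - (\<alpha> 2 - \<alpha> 0) / 3 * (\<tau> 2 x * \<tau> 0 x) = 0)"
    if x: "x \<in> S" for x
  proof -
    have h0: "(hirota_D2 (\<tau> 0) (\<tau> 1) x - x * hirota_D1 (\<tau> 0) (\<tau> 1) x - (\<alpha> 0 - \<alpha> 1) / 3 * (\<tau> 0 x * \<tau> 1 x) = 0)
      \<longleftrightarrow> L 0 x + L 1 x + (l 0 x - l 1 x)^2 - x * (l 0 x - l 1 x) - (\<alpha> 0 - \<alpha> 1) / 3 = 0"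
      by (rule HZ) (simp_all add: x)
    have h1: "(hirota_D2 (\<tau> 1) (\<tau> 2) x - x * hirota_D1 (\<tau> 1) (\<tau> 2) x - (\<alpha> 1 - \<alpha> 2) / 3 * (\<tau> 1 x * \<tau> 2 x) = 0)
      \<longleftrightarrow> L 1 x + L 2 x + (l 1 x - l 2 x)^2 - x * (l 1 x - l 2 x) - (\<alpha> 1 - \<alpha> 2) / 3 = 0"
      by (rule HZ) (simp_all add: x)
    have h2: "(hirota_D2 (\<tau> 2) (\<tau> 0) x - x * hirota_D1 (\<tau> 2) (\<tau> 0) x - (\<alpha> 2 - \<alpha> 0) / 3 * (\<tau> 2 x * \<tau> 0 x) = 0)
      \<longleftrightarrow> L 2 x + L 0 x + (l 2 x - l 0 x)^2 - x * (l 2 x - l 0 x) - (\<alpha> 2 - \<alpha> 0) / 3 = 0"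
      by (rule HZ) (simp_all add: x)
    have f0: "fP \<tau> 0 x = l 1 x - l 2 x + x" using fv[of 0 x] by (simp only: m)
    have f1: "fP \<tau> 1 x = l 2 x - l 0 x + x" using fv[of 1 x] by (simp only: m)
    have f2: "fP \<tau> 2 x = l 0 x - l 1 x + x" using fv[of 2 x] by (simp only: m)
    have d0: "deriv (fP \<tau> 0) x = L 1 x - L 2 x + 1" using dF[OF x, of 0] by (simp only: m)
    have d1: "deriv (fP \<tau> 1) x = L 2 x - L 0 x + 1" using dF[OF x, of 1] by (simp only: m)
    have d2: "deriv (fP \<tau> 2) x = L 0 x - L 1 x + 1" using dF[OF x, of 2] by (simp only: m)
    show ?thesis
      unfolding h0 h1 h2 f0 f1 f2 d0 d1 d2 dG[OF x]
      by (rule alg[OF A(1)])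
  qed
  have sum3: "fP \<tau> 0 x + fP \<tau> 1 x + fP \<tau> 2 x = 3 * x" for x
    using fv[of 0 x] fv[of 1 x] fv[of 2 x] by (simp add: numeral_2_eq_2)
  have sq: "(\<Sum>i<3. (fP \<tau> i x - x)^2) = (fP \<tau> 0 x - x)^2 + (fP \<tau> 1 x - x)^2 + (fP \<tau> 2 x - x)^2" for x
    by (simp add: numeral_3_eq_3 numeral_2_eq_2)
  show ?thesis
  proof -
    show ?thesis
      apply (simp only: all3 sq m)
      using pt sum3 by blast
  qed
qed

end
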